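(* For every EIC problem $(R,B)$, $(D)_{(R,B)}\le 2\cdot (C)_{(R,B)}$.
   Context: An EIC problem is a pair $(R,B)$ of matrices in $\mathbb{F}_2^{n\times m}$ with disjoint supports; node $u\in[n]$ needs block $a\in[m]$ if $R_{ua}=1$ and has block $a$ if $B_{ua}=1$. Let $P=\{(u,a):R_{ua}=1\}$, $B_u$ the $u$-th row of $B$, $\mathrm{diag}(B_u)$ the diagonal matrix with $B_u$ on the diagonal, and $\boldsymbol e_a$ the $a$-th standard basis row vector of $\mathbb{F}_2^m$. A centralized linear broadcast solution is a matrix $\beta\in\mathbb{F}_2^{h\times m}$ such that for every $(u,a)\in P$ there is $\boldsymbol\alpha\in\mathbb{F}_2^{h+m}$ with $\boldsymbol e_a=\boldsymbol\alpha\cdot\left[\begin{smallmatrix}\beta\\ \mathrm{diag}(B_u)\end{smallmatrix}\right]$; its length is $h$, and $(C)_{(R,B)}$ is the minimum length of such a solution. A (decentralized) linear broadcast solution is a tuple of matrices $\beta^{(1)},\dots,\beta^{(n)}$ with $\beta^{(u)}\in\mathbb{F}_2^{h_u\times m}$ ($h_u\ge 0$) such that (i) for each $u$ and each $a$ with $B_{ua}=0$, the $a$-th column of $\beta^{(u)}$ is zero, and (ii) for each $(u,a)\in P$ there is $\boldsymbol\alpha\in\mathbb{F}_2^{\sum_\ell h_\ell+m}$ with $\boldsymbol e_a=\boldsymbol\alpha\cdot\left[\begin{smallmatrix}\beta^{(1)}\\ \vdots\\ \beta^{(n)}\\ \mathrm{diag}(B_u)\end{smallmatrix}\right]$. Its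 length is $\sum_u h_u$, and $(D)_{(R,B)}$ is the minimum length of such a solution. *)

theory Defs
  imports Main "HOL-Library.Z2"
begin

text \<open>Matrices over F_2 are functions nat => nat => bit, only entries with indices in
range are meaningful. R, B are n x m. Rows of a matrix are indexed first.\<close>

definition EIC_problem :: "nat \<Rightarrow> nat \<Rightarrow> (nat \<Rightarrow> nat \<Rightarrow> bit) \<Rightarrow> (nat \<Rightarrow> nat \<Rightarrow> bit) \<Rightarrow> bool" where
  "EIC_problem n m R B \<longleftrightarrow> (\<forall>u<n. \<forall>a<m. \<not> (R u a = 1 \<and> B u a = 1))"

definition needs :: "nat \<Rightarrow> nat \<Rightarrow> (nat \<Rightarrow> nat \<Rightarrow> bit) \<Rightarrow> (nat \<times> nat) set" where
  "needs n m R = {(u, a). u < n \<and> a < m \<and> R u a = 1}"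

definition e_vec :: "nat \<Rightarrow> nat \<Rightarrow> bit" where
  "e_vec a c = (if c = a then 1 else 0)"

text \<open>alpha \<cdot> [beta; diag(B_u)] at column c, beta an h x m matrix, alpha in F_2^(h+m)\<close>
definition cent_comb :: "nat \<Rightarrow> nat \<Rightarrow> (nat \<Rightarrow> nat \<Rightarrow> bit) \<Rightarrow> (nat \<Rightarrow> nat \<Rightarrow> bit) \<Rightarrow> nat
    \<Rightarrow> (nat \<Rightarrow> bit) \<Rightarrow> nat \<Rightarrow> bit" where
  "cent_comb m h \<beta> B u \<alpha> c =
     (\<Sum>i<h. \<alpha> i * \<beta> i c) + (\<Sum>j<m. \<alpha> (h + j) * (if j = c then B u c else 0))"

definition cent_solution :: "nat \<Rightarrow> nat \<Rightarrow> (nat \<Rightarrow> nat \<Rightarrow> bit) \<Rightarrow> (nat \<Rightarrow> nat \<Rightarrow> bit)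
    \<Rightarrow> nat \<Rightarrow> (nat \<Rightarrow> nat \<Rightarrow> bit) \<Rightarrow> bool" where
  "cent_solution n m R B h \<beta> \<longleftrightarrow>
     (\<forall>(u, a) \<in> needs n m R. \<exists>\<alpha>. \<forall>c<m. e_vec a c = cent_comb m h \<beta> B u \<alpha> c)"

definition C_opt :: "nat \<Rightarrow> nat \<Rightarrow> (nat \<Rightarrow> nat \<Rightarrow> bit) \<Rightarrow> (nat \<Rightarrow> nat \<Rightarrow> bit) \<Rightarrow> nat" where
  "C_opt n m R B = (LEAST h. \<exists>\<beta>. cent_solution n m R B h \<beta>)"

text \<open>Decentralized: node v (v < n) sends hs v rows; beta v i c is entry (i, c) of beta^(v).
  The stacked coefficient vector alpha is indexed by pairs (v, i) for the rows of
  beta^(1),...,beta^(n), and by j < m (via gam) for the rows of diag(B_u).\<close>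
definition dec_comb :: "nat \<Rightarrow> nat \<Rightarrow> (nat \<Rightarrow> nat) \<Rightarrow> (nat \<Rightarrow> nat \<Rightarrow> nat \<Rightarrow> bit)
    \<Rightarrow> (nat \<Rightarrow> nat \<Rightarrow> bit) \<Rightarrow> nat \<Rightarrow> (nat \<times> nat \<Rightarrow> bit) \<Rightarrow> (nat \<Rightarrow> bit) \<Rightarrow> nat \<Rightarrow> bit" where
  "dec_comb n m hs \<beta> B u \<alpha> \<gamma> c =
     (\<Sum>v<n. \<Sum>i<hs v. \<alpha> (v, i) * \<beta> v i c) + (\<Sum>j<m. \<gamma> j * (if j = c then B u c else 0))"

definition dec_solution :: "nat \<Rightarrow> nat \<Rightarrow> (nat \<Rightarrow> nat \<Rightarrow> bit) \<Rightarrow> (nat \<Rightarrow> nat \<Rightarrow> bit)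
    \<Rightarrow> (nat \<Rightarrow> nat) \<Rightarrow> (nat \<Rightarrow> nat \<Rightarrow> nat \<Rightarrow> bit) \<Rightarrow> bool" where
  "dec_solution n m R B hs \<beta> \<longleftrightarrow>
     (\<forall>v<n. \<forall>a<m. B v a = 0 \<longrightarrow> (\<forall>i<hs v. \<beta> v i a = 0)) \<and>
     (\<forall>(u, a) \<in> needs n m R. \<exists>\<alpha> \<gamma>. \<forall>c<m. e_vec a c = dec_comb n m hs \<beta> B u \<alpha> \<gamma> c)"

definition D_opt :: "nat \<Rightarrow> nat \<Rightarrow> (nat \<Rightarrow> nat \<Rightarrow> bit) \<Rightarrow> (nat \<Rightarrow> nat \<Rightarrow> bit) \<Rightarrow> nat" where
  "D_opt n m R B = (LEAST l. \<exists>hs \<beta>. dec_solution n m R B hs \<beta> \<and> (\<Sum>v<n. hs v) = l)"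

end

theory Submission
  imports Defs "HOL-Library.Function_Algebras" "HOL.Vector_Spaces"
begin

lemma bit_add_self[simp]: "(x::bit) + x = 0"
  by (cases x) auto

lemma sum_fun_apply: "(\<Sum>i\<in>A. f i) x = (\<Sum>i\<in>A. f i x)"
  by (induction A rule: infinite_finite_induct) (auto simp: zero_fun_def)

lemma sum_split_add: "(\<Sum>j<a+b. F j) = (\<Sum>j<a. F j) + (\<Sum>j<b. F (a+j::nat))"
  by (induction b) (auto simp: add.assoc)

interpretation V2: vector_space "(\<lambda>(c::bit) (f::nat\<Rightarrow>bit). (\<lambda>x. c * f x))"
  by unfold_locales (auto simp: fun_eq_iff algebra_simps)

lemma cent_exists: "cent_solution n m R B m (\<lambda>i c. if i = c then 1 else 0)"
  unfolding cent_solution_def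
proof (clarify)
  fix u a assume "(u, a) \<in> needs n m R"
  then have am: "a < m" by (simp add: needs_def)
  show "\<exists>\<alpha>. \<forall>c<m. e_vec a c = cent_comb m m (\<lambda>i c. if i = c then 1 else 0) B u \<alpha> c"
  proof (intro exI allI impI)
    fix c assume "c < m"
    show "e_vec a c = cent_comb m m (\<lambda>i c. if i = c then 1 else 0) B u (\<lambda>i. if i = a then 1 else 0) c"
    proof -
      have 1: "(\<Sum>i<m. (if i = a then 1 else 0) * (if i = c then 1 else 0)) = (if a = c then (1::bit) else 0)"
      proof -
        have "(\<Sum>i<m. (if i = a then 1 else 0) * (if i = c then 1 else 0)) = (\<Sum>i<m. if i = a then (if a = c then (1::bit) else 0) else 0)"
          by (rule sum.cong) auto
        also have "\<dots> = (if a = c then (1::bit) else 0)" using am by (subst sum.delta) auto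
        finally show ?thesis .
      qed
      have 2: "(\<Sum>j<m. (if m + j = a then (1::bit) else 0) * (if j = c then B u c else 0)) = 0"
        using am by (intro sum.neutral) auto
      have 3: "(if c = a then (1::bit) else 0) = (if a = c then 1 else 0)" by auto
      show ?thesis unfolding cent_comb_def e_vec_def by (simp only: 1 2 3) simp
    qed
  qed
qed

lemma delta_sum_simp:
  assumes "c < m"
  shows "(\<Sum>j<(m::nat). (f j::bit) * (if j = c then x else 0)) = f c * x"
proof -
  have "(\<Sum>j<m. (f j::bit) * (if j = c then x else 0)) = (\<Sum>j<m. if j = c then f c * x else 0)"
    by (rule sum.cong) auto
  also have "\<dots> = f c * x" using assms by (subst sum.delta) auto
  finally show ?thesis .
qed

lemma cent_comb_simp:
  "c < m \<Longrightarrow> cent_comb m h \<beta> B u \<alpha> c = (\<Sum>i<h. \<alpha> i * \<beta> i c) + \<alpha> (h + c) * B u c"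
  unfolding cent_comb_def by (subst delta_sum_simp[where f = "\<lambda>j. \<alpha> (h + j)"]) auto

lemma dec_comb_simp:
  "c < m \<Longrightarrow> dec_comb n m hs \<beta> B u \<alpha> \<gamma> c = (\<Sum>v<n. \<Sum>i<hs v. \<alpha> (v, i) * \<beta> v i c) + \<gamma> c * B u c"
  unfolding dec_comb_def by (subst delta_sum_simp[where f = \<gamma>]) auto

lemma bit_solve: "(e::bit) = s + b \<Longrightarrow> s = e + b"
proof -
  assume "e = s + b"
  then have "e + b = s + (b + b)" by (simp add: add.assoc)
  then show ?thesis by simp
qed

theorem theorem4:
  fixes n m :: nat and R B :: "nat \<Rightarrow> nat \<Rightarrow> bit"
  assumes "EIC_problem n m R B"
    and hold_ex: "\<forall>(u, a) \<in> needs n m R. \<exists>v<n. B v a = 1"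
  shows "D_opt n m R B \<le> 2 * C_opt n m R B"
proof -
  have "\<exists>h \<beta>. cent_solution n m R B h \<beta>" using cent_exists by blast
  hence "\<exists>\<beta>. cent_solution n m R B (C_opt n m R B) \<beta>"
    unfolding C_opt_def by (rule LeastI_ex)
  then obtain \<beta> where csol0: "cent_solution n m R B (C_opt n m R B) \<beta>" by blast
  define h where "h = C_opt n m R B"
  have csol: "cent_solution n m R B h \<beta>" using csol0 by (simp add: h_def)
  define r where "r i = (\<lambda>c. if c < m then \<beta> i c else 0)" for i
  define wv where "wv \<alpha> = (\<lambda>c. if c < m then (\<Sum>i<h. \<alpha> i * \<beta> i c) else (0::bit))" for \<alpha> :: "nat \<Rightarrow> bit"
  define ok where "ok u a \<alpha> \<longleftrightarrow> (u, a) \<in> needs n m R \<and> (\<forall>c<m. e_vec a c = cent_comb m h \<beta> B u \<alpha> c)" for u a \<alpha>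
  define W where "W = {wv \<alpha> | u a \<alpha>. ok u a \<alpha>}"
  have wv_span: "wv \<alpha> \<in> V2.span (r ` {..<h})" for \<alpha>
  proof -
    have "wv \<alpha> = (\<Sum>i<h. (\<lambda>c. \<alpha> i * r i c))"
      by (auto simp: fun_eq_iff sum_fun_apply wv_def r_def)
    also have "\<dots> \<in> V2.span (r ` {..<h})"
      by (intro V2.span_sum V2.span_scale V2.span_base) auto
    finally show ?thesis .
  qed
  hence WR: "W \<subseteq> V2.span (r ` {..<h})" unfolding W_def by auto
  obtain Bs where Bs: "Bs \<subseteq> W" "V2.independent Bs" "W \<subseteq> V2.span Bs"
    by (rule V2.maximal_independent_subset)
  have "finite Bs \<and> card Bs \<le> card (r ` {..<h})"
    using V2.independent_span_bound[of "r ` {..<h}" Bs] Bs WR by auto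
  hence finB: "finite Bs" and cardB: "card Bs \<le> h"
    using card_image_le[of "{..<h}" r] by auto
  define k where "k = card Bs"
  obtain g where g: "bij_betw g {..<k} Bs"
    using ex_bij_betw_nat_finite[OF finB] by (auto simp: k_def atLeast0LessThan)
  have "\<forall>w\<in>Bs. \<exists>x. ok (fst x) (fst (snd x)) (snd (snd x)) \<and> w = wv (snd (snd x))"
    using Bs(1) unfolding W_def by fastforce
  then obtain sel where sel: "\<And>w. w \<in> Bs \<Longrightarrow> ok (fst (sel w)) (fst (snd (sel w))) (snd (snd (sel w))) \<and> w = wv (snd (snd (sel w)))"
    by metis
  define U where "U w = fst (sel w)" for w
  define A where "A w = fst (snd (sel w))" for w
  define Al where "Al w = snd (snd (sel w))" for w
  have selU: "ok (U w) (A w) (Al w)" "w = wv (Al w)" if "w \<in> Bs" for w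
    using sel[OF that] by (auto simp: U_def A_def Al_def)
  define hold where "hold a = (SOME v. v < n \<and> B v a = 1)" for a
  have hold: "hold a < n \<and> B (hold a) a = 1" if "(u, a) \<in> needs n m R" for u a
  proof -
    have "\<exists>v. v < n \<and> B v a = 1" using hold_ex that by auto
    then show ?thesis unfolding hold_def by (rule someI_ex)
  qed
  have Un: "U w < n" "(U w, A w) \<in> needs n m R" if "w \<in> Bs" for w
    using selU(1)[OF that] by (auto simp: ok_def needs_def)
  have wdec: "w c = e_vec (A w) c + Al w (h + c) * B (U w) c" if "w \<in> Bs" "c < m" for w c
  proof -
    have "e_vec (A w) c = cent_comb m h \<beta> B (U w) (Al w) c"
      using selU(1)[OF that(1)] that(2) by (auto simp: ok_def)
    also have "\<dots> = (\<Sum>i<h. Al w i * \<beta> i c) + Al w (h + c) * B (U w) c"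
      using that(2) by (rule cent_comb_simp)
    finally have "(\<Sum>i<h. Al w i * \<beta> i c) = e_vec (A w) c + Al w (h + c) * B (U w) c"
      by (rule bit_solve)
    moreover have "w c = (\<Sum>i<h. Al w i * \<beta> i c)"
      using selU(2)[OF that(1)] that(2) by (metis wv_def)
    ultimately show ?thesis by simp
  qed
  define own where "own j = (if j < k then U (g j) else hold (A (g (j - k))))" for j
  define t where "t j = (\<lambda>c. if j < k then g j c + e_vec (A (g j)) c else e_vec (A (g (j - k))) c)" for j
  define J where "J v = {j \<in> {..<2*k}. own j = v}" for v
  define hs where "hs v = card (J v)" for v
  have gB: "g j \<in> Bs" if "j < k" for j using g that by (auto simp: bij_betw_def)
  have own_n: "own j < n" if "j < 2 * k" for j
  proof (cases "j < k")
    case True then show ?thesis using Un(1)[OF gB[OF True]] by (simp add: own_def)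
  next
    case False
    then have "j - k < k" using that by auto
    then show ?thesis using False hold[OF Un(2)[OF gB]] by (simp add: own_def)
  qed
  have "\<forall>v. \<exists>G. bij_betw G {..<hs v} (J v)"
  proof
    fix v
    have "finite (J v)" by (simp add: J_def)
    then show "\<exists>G. bij_betw G {..<hs v} (J v)"
      using ex_bij_betw_nat_finite by (auto simp: hs_def atLeast0LessThan)
  qed
  then obtain G where G: "\<And>v. bij_betw (G v) {..<hs v} (J v)" by metis
  define \<beta>' where "\<beta>' v i c = t (G v i) c" for v i c
  have sum_re: "(\<Sum>v<n. \<Sum>i<hs v. F (G v i)) = (\<Sum>j<2*k. F j)" for F :: "nat \<Rightarrow> 'z::comm_monoid_add"
  proof -
    have "(\<Sum>v<n. \<Sum>i<hs v. F (G v i)) = (\<Sum>v<n. \<Sum>j\<in>J v. F j)"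
      by (rule sum.cong[OF refl], rule sum.reindex_bij_betw[OF G])
    also have "\<dots> = (\<Sum>j<2*k. F j)"
      unfolding J_def by (rule sum.group) (auto simp: own_n)
    finally show ?thesis .
  qed
  have hs_sum: "(\<Sum>v<n. hs v) = 2 * k"
  proof -
    have "(\<Sum>v<n. hs v) = (\<Sum>v<n. \<Sum>i<hs v. (\<lambda>_. 1::nat) (G v i))" by simp
    also have "\<dots> = 2 * k" by (subst sum_re) simp
    finally show ?thesis .
  qed
  have GJ: "G v i < 2 * k \<and> own (G v i) = v" if "i < hs v" for v i
    using G[of v] that by (auto simp: bij_betw_def J_def)
  have part1: "\<forall>v<n. \<forall>a<m. B v a = 0 \<longrightarrow> (\<forall>i<hs v. \<beta>' v i a = 0)"
  proof (intro allI impI)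
    fix v a i assume v: "v < n" and a: "a < m" and Bva: "B v a = 0" and i: "i < hs v"
    define j where "j = G v i"
    have j: "j < 2 * k" "own j = v" using GJ[OF i] by (auto simp: j_def)
    show "\<beta>' v i a = 0"
    proof (cases "j < k")
      case True
      have "t j a = Al (g j) (h + a) * B (U (g j)) a"
        using wdec[OF gB[OF True] a] True by (simp add: t_def)
      also have "\<dots> = 0" using j(2) True Bva by (simp add: own_def)
      finally show ?thesis by (simp add: \<beta>'_def j_def)
    next
      case False
      then have jk: "j - k < k" using j by auto
      have "B v (A (g (j - k))) = 1" using hold[OF Un(2)[OF gB[OF jk]]] j(2) False
        by (simp add: own_def)
      then have "A (g (j - k)) \<noteq> a" using Bva by auto
      then show ?thesis using False by (simp add: \<beta>'_def j_def[symmetric] t_def e_vec_def)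
    qed
  qed
  have part2: "\<forall>(u, a) \<in> needs n m R. \<exists>\<alpha> \<gamma>. \<forall>c<m. e_vec a c = dec_comb n m hs \<beta>' B u \<alpha> \<gamma> c"
  proof (clarify)
    fix u a assume ua: "(u, a) \<in> needs n m R"
    obtain \<alpha> where \<alpha>: "\<forall>c<m. e_vec a c = cent_comb m h \<beta> B u \<alpha> c"
      using csol ua unfolding cent_solution_def by blast
    have "wv \<alpha> \<in> W" unfolding W_def ok_def using ua \<alpha> by blast
    then have "wv \<alpha> \<in> V2.span Bs" using Bs(3) by auto
    then obtain \<mu> where \<mu>: "wv \<alpha> = (\<Sum>x\<in>Bs. (\<lambda>c. \<mu> x * x c))"
      unfolding V2.span_finite[OF finB] by auto
    define lam where "lam j = (if j < k then \<mu> (g j) else \<mu> (g (j - k)))" for j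
    show "\<exists>\<alpha>' \<gamma>. \<forall>c<m. e_vec a c = dec_comb n m hs \<beta>' B u \<alpha>' \<gamma> c"
    proof (intro exI allI impI)
      fix c assume c: "c < m"
      have "(\<Sum>v<n. \<Sum>i<hs v. (\<lambda>(v, i). lam (G v i)) (v, i) * \<beta>' v i c) = (\<Sum>j<2*k. lam j * t j c)"
        unfolding \<beta>'_def case_prod_conv by (rule sum_re[of "\<lambda>j. lam j * t j c"])
      also have "\<dots> = (\<Sum>j<k. lam j * t j c) + (\<Sum>j<k. lam (k + j) * t (k + j) c)"
        using sum_split_add[of "\<lambda>j. lam j * t j c" k k] by (simp add: mult_2)
      also have "\<dots> = (\<Sum>j<k. \<mu> (g j) * (g j c + e_vec (A (g j)) c)) + (\<Sum>j<k. \<mu> (g j) * e_vec (A (g j)) c)"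
        by (intro arg_cong2[where f="(+)"] sum.cong) (auto simp: lam_def t_def)
      also have "\<dots> = (\<Sum>j<k. \<mu> (g j) * (g j c + e_vec (A (g j)) c) + \<mu> (g j) * e_vec (A (g j)) c)"
        by (rule sum.distrib[symmetric])
      also have "\<dots> = (\<Sum>j<k. \<mu> (g j) * g j c)"
        by (rule sum.cong) (auto simp: distrib_left add.assoc)
      also have "\<dots> = (\<Sum>x\<in>Bs. \<mu> x * x c)"
        by (rule sum.reindex_bij_betw[OF g, where g = "\<lambda>x. \<mu> x * x c"])
      also have "\<dots> = wv \<alpha> c" using \<mu> by (simp add: sum_fun_apply)
      also have "\<dots> = (\<Sum>i<h. \<alpha> i * \<beta> i c)" using c by (simp add: wv_def)
      finally have S: "(\<Sum>v<n. \<Sum>i<hs v. (\<lambda>(v, i). lam (G v i)) (v, i) * \<beta>' v i c) = (\<Sum>i<h. \<alpha> i * \<beta> i c)" .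
      show "e_vec a c = dec_comb n m hs \<beta>' B u (\<lambda>(v, i). lam (G v i)) (\<lambda>j. \<alpha> (h + j)) c"
        using \<alpha> c S by (simp add: dec_comb_simp cent_comb_simp)
    qed
  qed
  have "dec_solution n m R B hs \<beta>' \<and> (\<Sum>v<n. hs v) = 2 * k"
    using part1 part2 hs_sum unfolding dec_solution_def by blast
  then have "D_opt n m R B \<le> 2 * k"
    unfolding D_opt_def by (intro Least_le) blast
  also have "\<dots> \<le> 2 * h" using cardB by (simp add: k_def)
  finally show ?thesis by (simp add: h_def)
qed

end
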